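(* Let $A$ be a finite alphabet. Consider two words $u,u'\in A^*$, both of richness $m$, with rich factorizations $u=u_1a_1\cdots u_ma_mv$ and $u'=u'_1a_1\cdots u'_ma_mv'$ (with the same letters $a_1,\ldots,a_m$). Suppose that $v\sim_n v'$ and that $u_i\sim_{n+1}u'_i$ for all $i=1,\ldots,m$. Then $u\sim_{n+m}u'$.
   Context: A word is rich if every letter of $A$ occurs in it, and poor otherwise. $u$ is $\ell$-rich if $u=w_1\cdots w_\ell w'$ with $w_1,\ldots,w_\ell$ rich; the richness of $u$ is the largest such $\ell$. The rich factorization of $u$ is defined inductively: if $u$ is poor it is $u=v$ with $m=0$; otherwise $u_1a_1$ ($a_1$ a letter) is the shortest rich prefix of $u$, followed by the rich factorization $u_2a_2\cdots u_ma_mv$ of the remaining suffix. Thus $u=u_1a_1\cdots u_ma_mv$ with $m$ the richness of $u$. $u\sim_n v$ iff $u,v$ have the same (scattered) subwords of length at most $n$. *)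

theory Defs
  imports Main "HOL-Library.Sublist"
begin

definition rich :: "'a set \<Rightarrow> 'a list \<Rightarrow> bool" where
  "rich A w \<longleftrightarrow> A \<subseteq> set w"

definition simeq :: "nat \<Rightarrow> 'a list \<Rightarrow> 'a list \<Rightarrow> bool" where
  "simeq n u v \<longleftrightarrow> (\<forall>w. length w \<le> n \<longrightarrow> (subseq w u \<longleftrightarrow> subseq w v))"

definition richness :: "'a set \<Rightarrow> 'a list \<Rightarrow> nat" where
  "richness A u = (GREATEST l. \<exists>ws w'. length ws = l \<and> (\<forall>x\<in>set ws. rich A x) \<and> u = concat ws @ w')"

text \<open>Rich factorization u = u_1 a_1 ... u_m a_m v, unfolding the inductive definition:
  u_i a_i is the shortest rich prefix of the remaining suffix (i.e. u_i a_i rich, u_i poor),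
  and the final remainder v is poor.\<close>
fun rich_factorization :: "'a set \<Rightarrow> 'a list \<Rightarrow> 'a list list \<Rightarrow> 'a list \<Rightarrow> 'a list \<Rightarrow> bool" where
  "rich_factorization A u [] [] v \<longleftrightarrow> \<not> rich A u \<and> u = v"
| "rich_factorization A u (x # xs) (a # as) v \<longleftrightarrow>
     rich A u \<and> (\<exists>r. u = x @ [a] @ r \<and> rich A (x @ [a]) \<and> \<not> rich A x
                        \<and> rich_factorization A r xs as v)"
| "rich_factorization A u _ _ v \<longleftrightarrow> False"

end

theory Submission
  imports Defs
begin

lemma subseq_set_sub: "subseq w u \<Longrightarrow> set w \<subseteq> set u"
  by (induct rule: list_emb.induct) auto

lemma simeq_sym: "simeq n u v \<Longrightarrow> simeq n v u"
  unfolding simeq_def by blast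

lemma rf_blocks:
  "rich_factorization A u us as v \<Longrightarrow>
     length us = length as \<and> (\<exists>bs t. length bs = length as \<and> (\<forall>b\<in>set bs. rich A b) \<and> u = concat bs @ t)"
proof (induction A u us as v rule: rich_factorization.induct)
  case (1 A u v)
  then show ?case by auto
next
  case (2 A u x xs a as v)
  then obtain r where r: "u = x @ [a] @ r" "rich A (x @ [a])" "rich_factorization A r xs as v"
    by auto
  with 2 obtain bs t where "length xs = length as" "length bs = length as" "\<forall>b\<in>set bs. rich A b" "r = concat bs @ t"
    by blast
  then show ?case using r
    by (intro conjI exI[of _ "(x@[a]) # bs"] exI[of _ t]) auto
qed auto

lemma rich_concat_subseq:
  "(\<forall>b\<in>set bs. rich A b) \<Longrightarrow> set z \<subseteq> A \<Longrightarrow> length z \<le> length bs \<Longrightarrow> subseq z (concat bs @ t)"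
proof (induction bs arbitrary: z)
  case Nil
  then show ?case by auto
next
  case (Cons b bs)
  show ?case
  proof (cases z)
    case Nil
    then show ?thesis by auto
  next
    case (Cons c z')
    with Cons.prems have "c \<in> set b" unfolding rich_def by auto
    then have "subseq [c] b" by (simp add: subseq_singleton_left)
    moreover have "subseq z' (concat bs @ t)" using Cons.IH Cons.prems \<open>z = c # z'\<close> by auto
    ultimately have "subseq ([c] @ z') (b @ (concat bs @ t))" by (rule list_emb_append_mono)
    then show ?thesis using \<open>z = c # z'\<close> by simp
  qed
qed

lemma core:
  assumes "rich A (x@[a])" "rich A (x'@[a])" "set w \<subseteq> A" "simeq (Suc n) x x'"
    "simeq N r r'" "n \<le> N" "\<forall>z. set z \<subseteq> A \<longrightarrow> length z \<le> N - n \<longrightarrow> subseq z r'"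
    "length w \<le> Suc N" "subseq w (x@[a]@r)"
  shows "subseq w (x'@[a]@r')"
proof -
  obtain w1 w23 where w: "w = w1 @ w23" "subseq w1 x" "subseq w23 ([a]@r)"
    using subseq_appendE[OF assms(9)] by blast
  obtain w2 w3 where w23: "w23 = w2 @ w3" "subseq w2 [a]" "subseq w3 r"
    using subseq_appendE[OF w(3)] by blast
  show ?thesis
  proof (cases "length w1 > Suc n")
    case True
    let ?p = "take (Suc n) w1" and ?q = "drop (Suc n) w1 @ w23"
    have "subseq ?p w1" by (metis append_take_drop_id prefix_imp_subseq prefixI)
    then have "subseq ?p x" using w(2) by (rule subseq_order.order_trans)
    then have p: "subseq ?p x'" using assms(4) True unfolding simeq_def by auto
    have "length ?q \<le> N - n" using True assms(8) w by auto
    moreover have "set ?q \<subseteq> A" using assms(3) w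
      by (auto dest: in_set_dropD)
    ultimately have "subseq ?q r'" using assms(7) by blast
    then have "subseq ?q ([a] @ r')" by (rule subseq_drop_many)
    with p have "subseq (?p @ ?q) (x' @ ([a] @ r'))" by (rule list_emb_append_mono)
    moreover have "?p @ ?q = w" using w(1) by (metis append_take_drop_id append_assoc)
    ultimately show ?thesis by simp
  next
    case False
    show ?thesis
    proof (cases "w1 = []")
      case True
      show ?thesis
      proof (cases w)
        case Nil
        then show ?thesis by simp
      next
        case (Cons c w')
        have ca: "subseq (c # w') (a # r)" using w True Cons by simp
        have wr: "subseq w' r"
        proof (cases "c = a")
          case True
          then show ?thesis using ca by simp
        next
          case False
          then have "subseq (c # w') r" using ca by simp
          then show ?thesis by (rule subseq_Cons')
        qed
        have "length w' \<le> N" using assms(8) Cons by simp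
        then have wr': "subseq w' r'" using wr assms(5) unfolding simeq_def by blast
        show ?thesis
        proof (cases "c = a")
          case True
          then have "subseq (a # w') (a # r')" using wr' by simp
          then have "subseq (a # w') (x' @ (a # r'))" by (rule subseq_drop_many)
          then show ?thesis using Cons True by simp
        next
          case False
          have "c \<in> A" using assms(3) Cons by simp
          then have "c \<in> set x'" using assms(2) False unfolding rich_def by auto
          then have "subseq [c] x'" by (simp add: subseq_singleton_left)
          moreover have "subseq w' ([a] @ r')" using wr' by (rule subseq_drop_many)
          ultimately have "subseq ([c] @ w') (x' @ ([a] @ r'))" by (rule list_emb_append_mono)
          then show ?thesis using Cons by simp
        qed
      qed
    next
      case ne: False
      have p: "subseq w1 x'" using assms(4) False w(2) unfolding simeq_def by auto
      have "length w3 \<le> N" using assms(8) w w23 ne by (cases w1) auto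
      then have "subseq w3 r'" using assms(5) w23(3) unfolding simeq_def by blast
      with w23(2) have "subseq (w2 @ w3) ([a] @ r')" by (rule list_emb_append_mono)
      with p have "subseq (w1 @ (w2 @ w3)) (x' @ ([a] @ r'))" by (rule list_emb_append_mono)
      then show ?thesis using w w23 by simp
    qed
  qed
qed

lemma gen:
  "rich_factorization A u us as v \<Longrightarrow> rich_factorization A u' us' as v' \<Longrightarrow>
   set u \<subseteq> A \<Longrightarrow> set u' \<subseteq> A \<Longrightarrow> simeq n v v' \<Longrightarrow>
   \<forall>i<length as. simeq (Suc n) (us ! i) (us' ! i) \<Longrightarrow> simeq (n + length as) u u'"
proof (induction as arbitrary: u u' us us')
  case Nil
  have "us = []" using Nil.prems(1) by (cases us) simp_all
  moreover have "us' = []" using Nil.prems(2) by (cases us') simp_all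
  ultimately have "u = v" "u' = v'" using Nil.prems(1,2) by simp_all
  then show ?case using Nil.prems(5) by simp
next
  case (Cons a as)
  obtain x xs where us: "us = x # xs" using Cons.prems(1) by (cases us) auto
  obtain x' xs' where us': "us' = x' # xs'" using Cons.prems(2) by (cases us') auto
  obtain r where r: "u = x @ [a] @ r" "rich A (x @ [a])" "rich_factorization A r xs as v"
    using Cons.prems(1) us by auto
  obtain r' where r': "u' = x' @ [a] @ r'" "rich A (x' @ [a])" "rich_factorization A r' xs' as v'"
    using Cons.prems(2) us' by auto
  have "simeq (Suc n) (us ! 0) (us' ! 0)" using Cons.prems(6) by simp
  then have hx: "simeq (Suc n) x x'" using us us' by simp
  have hi: "\<forall>i<length as. simeq (Suc n) (xs ! i) (xs' ! i)"
  proof (intro allI impI)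
    fix i assume "i < length as"
    then have "simeq (Suc n) (us ! Suc i) (us' ! Suc i)" using Cons.prems(6) by simp
    then show "simeq (Suc n) (xs ! i) (xs' ! i)" using us us' by simp
  qed
  have IH: "simeq (n + length as) r r'"
  proof -
    have "set r \<subseteq> A" using Cons.prems(3) r(1) by simp
    moreover have "set r' \<subseteq> A" using Cons.prems(4) r'(1) by simp
    ultimately show ?thesis using Cons.IH[OF r(3) r'(3) _ _ Cons.prems(5) hi] by blast
  qed
  obtain bs t where bs: "length bs = length as" "\<forall>b\<in>set bs. rich A b" "r = concat bs @ t"
    using rf_blocks[OF r(3)] by blast
  obtain bs' t' where bs': "length bs' = length as" "\<forall>b\<in>set bs'. rich A b" "r' = concat bs' @ t'"
    using rf_blocks[OF r'(3)] by blast
  have R: "\<forall>z. set z \<subseteq> A \<longrightarrow> length z \<le> n + length as - n \<longrightarrow> subseq z r"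
    using rich_concat_subseq[OF bs(2)] bs by auto
  have R': "\<forall>z. set z \<subseteq> A \<longrightarrow> length z \<le> n + length as - n \<longrightarrow> subseq z r'"
    using rich_concat_subseq[OF bs'(2)] bs' by auto
  show ?case unfolding simeq_def
  proof (intro allI impI iffI)
    fix w assume l: "length w \<le> n + length (a # as)" and s: "subseq w u"
    have "set w \<subseteq> A" using subseq_set_sub[OF s] Cons.prems(3) by auto
    moreover have "length w \<le> Suc (n + length as)" using l by simp
    moreover have "subseq w (x @ [a] @ r)" using s r(1) by simp
    ultimately have "subseq w (x' @ [a] @ r')" using core[OF r(2) r'(2) _ hx IH _ R'] by simp
    then show "subseq w u'" using r'(1) by simp
  next
    fix w assume l: "length w \<le> n + length (a # as)" and s: "subseq w u'"
    have "set w \<subseteq> A" using subseq_set_sub[OF s] Cons.prems(4) by auto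
    moreover have "length w \<le> Suc (n + length as)" using l by simp
    moreover have "subseq w (x' @ [a] @ r')" using s r'(1) by simp
    ultimately have "subseq w (x @ [a] @ r)" using core[OF r'(2) r(2) _ simeq_sym[OF hx] simeq_sym[OF IH] _ R] by simp
    then show "subseq w u" using r(1) by simp
  qed
qed

theorem lemma5:
  fixes A :: "'a set" and u u' v v' :: "'a list" and us us' :: "'a list list"
    and as :: "'a list" and m n :: nat
  assumes "finite A"
    and "set u \<subseteq> A" and "set u' \<subseteq> A"
    and "richness A u = m" and "richness A u' = m"
    and "rich_factorization A u us as v" and "rich_factorization A u' us' as v'"
    and "length as = m"
    and "simeq n v v'"
    and "\<forall>i<m. simeq (Suc n) (us ! i) (us' ! i)"
  shows "simeq (n + m) u u'"
proof -
  have "\<forall>i<length as. simeq (Suc n) (us ! i) (us' ! i)" using assms(8,10) by simp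
  from gen[OF assms(6,7,2,3,9) this] show ?thesis using assms(8) by simp
qed

end
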